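(* (i) $\lim_{u\uparrow1}\phi(u)=0$. (ii) For all $0<u<v<1$, $\phi(v)\ge\phi(u)-(v-u)$. (iii) For each $n\ge1$ and $u,v\in A^n_<$ with $u<v$, $\phi(v)\le\phi(u)$; that is, $\phi$ is non-increasing on each $A^n_<$.
   Context: Let $\mu,\nu$ be probability measures on $\mathbb R$ with finite first moments and $\mu\le_{cx}\nu$. Put $P_\eta(k)=\int(k-x)^+\eta(dx)$, $D=P_\nu-P_\mu$, and assume $\{k:D(k)>0\}$ is an interval. Let $G$ be any quantile function of $\mu$. For $u\in(0,1)$ let $\mu_u(A)=\mu(A\cap(-\infty,G(u)))+\big(u-\mu((-\infty,G(u)))\big)\delta_{G(u)}(A)$ and $\mathcal E_u=P_\nu-P_{\mu_u}$. $f^c$ is the largest convex minorant of $f$; $Z^f(y)=\inf\{z\ge y: f^c(z)=f(z)\}$. Define $S(u)=Z^{\mathcal E_u}(G(u))$ and $\phi(u)=\inf\partial\mathcal E_u^c(G(u))$. Let $A_<=\{u\in(0,1): G(u+)<S(u-)\}$, an open set, written as a countable disjoint union of open intervals $A^n_<$, $n\ge1$. *)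

theory Defs
  imports "HOL-Probability.Probability"
begin

definition ext_integral :: "real measure \<Rightarrow> (real \<Rightarrow> real) \<Rightarrow> ereal" where
  "ext_integral M f =
     enn2ereal (\<integral>\<^sup>+ x. ennreal (f x) \<partial>M) - enn2ereal (\<integral>\<^sup>+ x. ennreal (- f x) \<partial>M)"

definition cx_le :: "real measure \<Rightarrow> real measure \<Rightarrow> bool" where
  "cx_le M N \<longleftrightarrow> (\<forall>f. convex_on UNIV f \<longrightarrow> ext_integral M f \<le> ext_integral N f)"

definition put :: "real measure \<Rightarrow> real \<Rightarrow> real" where
  "put M k = (\<integral>x. max 0 (k - x) \<partial>M)"

definition quantile_fn :: "real measure \<Rightarrow> (real \<Rightarrow> real) \<Rightarrow> bool" where
  "quantile_fn M G \<longleftrightarrow>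
     (\<forall>u\<in>{0<..<1}. measure M {..<G u} \<le> u \<and> u \<le> measure M {..G u})"

text \<open>Put function of mu_u = mu restricted to (-inf,G u) plus (u - mu((-inf,G u))) times Dirac at G u,
  written out: P_{mu_u}(k).\<close>
definition put_trunc :: "real measure \<Rightarrow> (real \<Rightarrow> real) \<Rightarrow> real \<Rightarrow> real \<Rightarrow> real" where
  "put_trunc M G u k =
     (\<integral>x. indicator {..<G u} x * max 0 (k - x) \<partial>M)
     + (u - measure M {..<G u}) * max 0 (k - G u)"

definition E_fn :: "real measure \<Rightarrow> real measure \<Rightarrow> (real \<Rightarrow> real) \<Rightarrow> real \<Rightarrow> real \<Rightarrow> real" where
  "E_fn M N G u k = put N k - put_trunc M G u k"

definition convex_minorant :: "(real \<Rightarrow> real) \<Rightarrow> real \<Rightarrow> real" where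
  "convex_minorant f x = Sup {g x | g. convex_on UNIV g \<and> (\<forall>y. g y \<le> f y)}"

definition Zf :: "(real \<Rightarrow> real) \<Rightarrow> real \<Rightarrow> real" where
  "Zf f y = Inf {z. z \<ge> y \<and> convex_minorant f z = f z}"

definition subdiff :: "(real \<Rightarrow> real) \<Rightarrow> real \<Rightarrow> real set" where
  "subdiff f x = {s. \<forall>z. f x + s * (z - x) \<le> f z}"

definition S_fn :: "real measure \<Rightarrow> real measure \<Rightarrow> (real \<Rightarrow> real) \<Rightarrow> real \<Rightarrow> real" where
  "S_fn M N G u = Zf (E_fn M N G u) (G u)"

definition phi_fn :: "real measure \<Rightarrow> real measure \<Rightarrow> (real \<Rightarrow> real) \<Rightarrow> real \<Rightarrow> real" where
  "phi_fn M N G u = Inf (subdiff (convex_minorant (E_fn M N G u)) (G u))"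

definition A_lt :: "real measure \<Rightarrow> real measure \<Rightarrow> (real \<Rightarrow> real) \<Rightarrow> real set" where
  "A_lt M N G = {u\<in>{0<..<1}. Lim (at_right u) G < Lim (at_left u) (S_fn M N G)}"

end

theory Submission
  imports Defs
begin

lemma subdiffI:
  fixes f :: "real \<Rightarrow> real"
  assumes "\<And>z. f x + s * (z - x) \<le> f z" shows "s \<in> subdiff f x"
  using assms by (simp add: subdiff_def)

lemma subdiffD:
  fixes f :: "real \<Rightarrow> real"
  assumes "s \<in> subdiff f x" shows "f x + s * (z - x) \<le> f z"
  using assms by (simp add: subdiff_def)

lemma subdiff_left_sup_mem:
  fixes f :: "real \<Rightarrow> real"
  assumes cf: "convex_on UNIV f"
  shows "Sup {(f x - f z) / (x - z) | z. z < x} \<in> subdiff f x"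
proof -
  define Q where "Q = {(f x - f z) / (x - z) | z. z < x}"
  have ne: "Q \<noteq> {}" unfolding Q_def by (auto intro: exI[of _ "x - 1"])
  have ub: "q \<le> (f w - f x) / (w - x)" if "q \<in> Q" "x < w" for q w
  proof -
    from that obtain z where z: "z < x" "q = (f x - f z) / (x - z)" unfolding Q_def by auto
    have "(f z - f x) / (z - x) \<le> (f z - f w) / (z - w)"
      using convex_on_slope_le(1)[OF cf, of z w x] z that by auto
    also have "\<dots> \<le> (f x - f w) / (x - w)"
      using convex_on_slope_le(2)[OF cf, of z w x] z that by auto
    finally have "(f z - f x) / (z - x) \<le> (f x - f w) / (x - w)" .
    moreover have "(f z - f x) / (z - x) = (f x - f z) / (x - z)"
      by (metis minus_diff_eq minus_divide_divide)
    moreover have "(f x - f w) / (x - w) = (f w - f x) / (w - x)"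
      by (metis minus_diff_eq minus_divide_divide)
    ultimately show ?thesis using z by simp
  qed
  have bdd: "bdd_above Q" using ub[of _ "x+1"] by (auto intro!: bdd_aboveI)
  show ?thesis
    unfolding Q_def[symmetric]
  proof (rule subdiffI)
    fix z
    show "f x + Sup Q * (z - x) \<le> f z"
    proof (cases z x rule: linorder_cases)
      case less
      have "(f x - f z) / (x - z) \<le> Sup Q"
        using less by (intro cSup_upper[OF _ bdd]) (auto simp: Q_def)
      then have "f x - f z \<le> Sup Q * (x - z)" using less by (simp add: pos_divide_le_eq)
      then show ?thesis by (simp add: algebra_simps)
    next
      case equal then show ?thesis by simp
    next
      case greater
      have "Sup Q \<le> (f z - f x) / (z - x)"
        using greater by (intro cSup_least[OF ne]) (auto intro: ub)
      then have "Sup Q * (z - x) \<le> f z - f x" using greater by (simp add: pos_le_divide_eq)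
      then show ?thesis by (simp add: algebra_simps)
    qed
  qed
qed

lemma subdiff_nonempty:
  fixes f :: "real \<Rightarrow> real"
  assumes "convex_on UNIV f"
  shows "subdiff f x \<noteq> {}"
  using subdiff_left_sup_mem[OF assms] by auto

lemma subdiff_bdd_below:
  fixes f :: "real \<Rightarrow> real"
  shows "bdd_below (subdiff f x)"
proof (rule bdd_belowI)
  fix s assume "s \<in> subdiff f x"
  then have "f x + s * ((x - 1) - x) \<le> f (x - 1)" by (rule subdiffD)
  then show "f x - f (x - 1) \<le> s" by simp
qed

lemma subdiff_Inf_mem:
  fixes f :: "real \<Rightarrow> real"
  assumes cf: "convex_on UNIV f"
  shows "Inf (subdiff f x) \<in> subdiff f x"
proof -
  let ?D = "subdiff f x"
  have ne: "?D \<noteq> {}" by (rule subdiff_nonempty[OF cf])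
  show ?thesis
  proof (rule subdiffI)
    fix z
    show "f x + Inf ?D * (z - x) \<le> f z"
    proof (cases "z < x")
      case True
      have "(f x - f z) / (x - z) \<le> Inf ?D"
      proof (rule cInf_greatest[OF ne])
        fix s assume "s \<in> ?D"
        then have "f x + s * (z - x) \<le> f z" by (auto simp: subdiff_def)
        then show "(f x - f z) / (x - z) \<le> s" using True by (simp add: pos_divide_le_eq algebra_simps)
      qed
      then show ?thesis using True by (simp add: pos_divide_le_eq algebra_simps)
    next
      case False
      obtain s where s: "s \<in> ?D" using ne by auto
      have "Inf ?D \<le> s" by (rule cInf_lower[OF s subdiff_bdd_below])
      then have "Inf ?D * (z - x) \<le> s * (z - x)" using False by (intro mult_right_mono) auto
      moreover have "f x + s * (z - x) \<le> f z" using s by (auto simp: subdiff_def)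
      ultimately show ?thesis by simp
    qed
  qed
qed

lemma subdiff_Inf_le:
  fixes f :: "real \<Rightarrow> real"
  assumes "s \<in> subdiff f x" shows "Inf (subdiff f x) \<le> s"
  by (rule cInf_lower[OF assms subdiff_bdd_below])

lemma subdiff_Inf_ge:
  fixes f :: "real \<Rightarrow> real"
  assumes cf: "convex_on UNIV f" and "\<And>s. s \<in> subdiff f x \<Longrightarrow> c \<le> s"
  shows "c \<le> Inf (subdiff f x)"
  by (rule cInf_greatest[OF subdiff_nonempty[OF cf]]) (use assms in auto)

section \<open>Convex minorant\<close>

lemma cm_bdd:
  fixes f :: "real \<Rightarrow> real"
  assumes f0: "\<And>y. f y \<ge> 0"
  shows "{g x | g. convex_on UNIV g \<and> (\<forall>y. g y \<le> f y)} \<noteq> {}"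
    and "bdd_above {g x | g. convex_on UNIV g \<and> (\<forall>y. g y \<le> f y)}"
proof -
  have c0: "convex_on UNIV (\<lambda>y::real. 0::real)" by (simp add: convex_on_const)
  have "(\<lambda>y::real. 0::real) x \<in> {g x | g. convex_on UNIV g \<and> (\<forall>y. g y \<le> f y)}"
    using c0 f0 by (intro CollectI exI[of _ "\<lambda>y::real. 0::real"]) simp
  then show "{g x | g. convex_on UNIV g \<and> (\<forall>y. g y \<le> f y)} \<noteq> {}"
    by blast
  show "bdd_above {g x | g. convex_on UNIV g \<and> (\<forall>y. g y \<le> f y)}"
    by (rule bdd_aboveI[of _ "f x"]) auto
qed

lemma cm_le:
  fixes f :: "real \<Rightarrow> real"
  assumes "\<And>y. f y \<ge> 0"
  shows "convex_minorant f x \<le> f x"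
  unfolding convex_minorant_def
  by (rule cSup_least[OF cm_bdd(1)[OF assms]]) auto

lemma cm_ge:
  fixes f :: "real \<Rightarrow> real"
  assumes "\<And>y. f y \<ge> 0" and "convex_on UNIV g" and "\<And>y. g y \<le> f y"
  shows "g x \<le> convex_minorant f x"
  unfolding convex_minorant_def
proof (rule cSup_upper[OF _ cm_bdd(2)[OF assms(1)]])
  show "g x \<in> {g x |g. convex_on UNIV g \<and> (\<forall>y. g y \<le> f y)}"
    using assms(2,3) by (intro CollectI exI[of _ g]) simp
qed

lemma cm_nonneg:
  fixes f :: "real \<Rightarrow> real"
  assumes "\<And>y. f y \<ge> 0"
  shows "0 \<le> convex_minorant f x"
  by (rule cm_ge[OF assms, of "\<lambda>_. 0", simplified]) (simp_all add: convex_on_const assms)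

lemma cm_convex:
  fixes f :: "real \<Rightarrow> real"
  assumes f0: "\<And>y. f y \<ge> 0"
  shows "convex_on UNIV (convex_minorant f)"
proof (rule convex_onI)
  fix t x y :: real
  assume t: "0 < t" "t < 1"
  define z where "z = (1 - t) *\<^sub>R x + t *\<^sub>R y"
  have "convex_minorant f z \<le> (1 - t) * convex_minorant f x + t * convex_minorant f y"
    unfolding convex_minorant_def[of f z]
  proof (rule cSup_least)
    show "{g z |g. convex_on UNIV g \<and> (\<forall>y. g y \<le> f y)} \<noteq> {}"
      by (rule cm_bdd(1)[OF f0])
  next
    fix r assume "r \<in> {g z |g. convex_on UNIV g \<and> (\<forall>y. g y \<le> f y)}"
    then obtain g where g: "convex_on UNIV g" "\<forall>y. g y \<le> f y" "r = g z"
      by blast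
    have "g z \<le> (1 - t) * g x + t * g y"
      unfolding z_def by (rule convex_onD[OF g(1)]) (use t in auto)
    moreover have "g x \<le> convex_minorant f x" by (rule cm_ge[OF f0 g(1)]) (use g(2) in blast)
    moreover have "g y \<le> convex_minorant f y" by (rule cm_ge[OF f0 g(1)]) (use g(2) in blast)
    ultimately show "r \<le> (1 - t) * convex_minorant f x + t * convex_minorant f y"
      using t g(3) by (smt (verit, best) mult_left_mono)
  qed
  then show "convex_minorant f ((1 - t) *\<^sub>R x + t *\<^sub>R y)
        \<le> (1 - t) * convex_minorant f x + t * convex_minorant f y" unfolding z_def .
qed simp

definition II :: "real measure \<Rightarrow> real set \<Rightarrow> real \<Rightarrow> real" where
  "II M A k = (\<integral>x. indicator A x * max 0 (k - x) \<partial>M)"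

locale pmx = prob_space M for M :: "real measure" +
  assumes sM: "sets M = sets borel" and iM: "integrable M (\<lambda>x. x)"
begin

lemma spaceM: "space M = UNIV"
  using sets_eq_imp_space_eq[OF sM] by simp

lemma AspaceM: "A \<inter> space M = A"
  using spaceM by simp

lemma measM:
  assumes "f \<in> borel_measurable borel" shows "f \<in> borel_measurable M"
  using measurable_cong_sets[OF sM refl, of borel] assms by blast

lemma setsM: "A \<in> sets borel \<Longrightarrow> A \<in> sets M"
  using sM by simp

lemma int_absx: "integrable M (\<lambda>x. abs x)"
  using integrable_abs[OF iM] by simp

lemma int_ind:
  assumes A: "A \<in> sets borel"
  shows "integrable M (indicator A :: real \<Rightarrow> real)"
proof (rule integrable_real_indicator[OF setsM[OF A]])
  show "emeasure M A < \<infinity>" by (simp add: less_top[symmetric])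
qed

lemma int_ind_c:
  assumes A: "A \<in> sets borel"
  shows "integrable M (\<lambda>x. indicator A x * (c::real))"
  using int_ind[OF A] by simp

lemma int_h:
  assumes A: "A \<in> sets borel"
  shows "integrable M (\<lambda>x. indicator A x * max 0 (k - x))"
proof (rule Bochner_Integration.integrable_bound[where f="\<lambda>x. \<bar>k\<bar> + \<bar>x\<bar> :: real" and M=M])
  show "integrable M (\<lambda>x. \<bar>k\<bar> + \<bar>x\<bar>)"
    using int_absx by (intro Bochner_Integration.integrable_add) auto
  show "(\<lambda>x. indicator A x * max 0 (k - x)) \<in> borel_measurable M"
    using A by (intro measM) (auto intro!: borel_measurable_times borel_measurable_indicator)
  show "AE x in M. norm (indicator A x * max 0 (k - x)) \<le> norm (\<bar>k\<bar> + \<bar>x\<bar>)"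
    by (intro AE_I2) (auto split: split_indicator)
qed

lemma int_indx:
  assumes A: "A \<in> sets borel"
  shows "integrable M (\<lambda>x. indicator A x * x)"
  using integrable_real_mult_indicator[OF setsM[OF A] iM] by (simp add: mult.commute)

lemma II_nonneg: "0 \<le> II M A k"
  unfolding II_def by (rule Bochner_Integration.integral_nonneg) (auto split: split_indicator)

lemma II_convex:
  assumes A: "A \<in> sets borel"
  shows "convex_on UNIV (II M A)"
proof (rule convex_onI)
  fix t a b :: real assume t: "0 < t" "t < 1"
  have "II M A ((1 - t) *\<^sub>R a + t *\<^sub>R b)
      \<le> (\<integral>x. (1 - t) * (indicator A x * max 0 (a - x)) + t * (indicator A x * max 0 (b - x)) \<partial>M)"
    unfolding II_def
  proof (rule Bochner_Integration.integral_mono)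
    show "integrable M (\<lambda>x. indicator A x * max 0 ((1 - t) *\<^sub>R a + t *\<^sub>R b - x))"
      by (rule int_h[OF A])
    show "integrable M (\<lambda>x. (1 - t) * (indicator A x * max 0 (a - x)) + t * (indicator A x * max 0 (b - x)))"
      by (rule Bochner_Integration.integrable_add; rule integrable_mult_right; rule int_h[OF A])
    fix x
    have "max 0 ((1 - t) * a + t * b - x) \<le> (1 - t) * max 0 (a - x) + t * max 0 (b - x)"
    proof -
      have e: "(1 - t) * a + t * b - x = (1 - t) * (a - x) + t * (b - x)" by (simp add: algebra_simps)
      have "(1 - t) * (a - x) \<le> (1 - t) * max 0 (a - x)" using t by (intro mult_left_mono) auto
      moreover have "t * (b - x) \<le> t * max 0 (b - x)" using t by (intro mult_left_mono) auto
      moreover have "0 \<le> (1 - t) * max 0 (a - x)" "0 \<le> t * max 0 (b - x)" using t by auto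
      ultimately show ?thesis unfolding e by linarith
    qed
    then show "indicator A x * max 0 ((1 - t) *\<^sub>R a + t *\<^sub>R b - x)
        \<le> (1 - t) * (indicator A x * max 0 (a - x)) + t * (indicator A x * max 0 (b - x))"
      by (auto split: split_indicator simp: algebra_simps)
  qed
  also have "\<dots> = (1 - t) * II M A a + t * II M A b"
    unfolding II_def using int_h[OF A]
    by (subst Bochner_Integration.integral_add) (auto intro!: integrable_mult_right)
  finally show "II M A ((1 - t) *\<^sub>R a + t *\<^sub>R b) \<le> (1 - t) * II M A a + t * II M A b" .
qed simp

lemma II_le:
  assumes A: "A \<in> sets borel" and sub: "A \<subseteq> {a..}"
  shows "II M A k \<le> measure M A * max 0 (k - a)"
proof -
  have "II M A k \<le> (\<integral>x. indicator A x * max 0 (k - a) \<partial>M)"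
    unfolding II_def
  proof (rule Bochner_Integration.integral_mono)
    show "integrable M (\<lambda>x. indicator A x * max 0 (k - x))" by (rule int_h[OF A])
    show "integrable M (\<lambda>x. indicator A x * max 0 (k - a))"
      by (rule int_ind_c[OF A])
    fix x show "indicator A x * max 0 (k - x) \<le> indicator A x * max 0 (k - a)"
      using sub by (auto split: split_indicator)
  qed
  also have "\<dots> = measure M A * max 0 (k - a)"
    by (simp add: AspaceM)
  finally show ?thesis .
qed

lemma II_zero:
  assumes sub: "A \<subseteq> {a..}" and k: "k \<le> a"
  shows "II M A k = 0"
proof -
  have "(\<lambda>x. indicator A x * max 0 (k - x)) = (\<lambda>x. 0::real)"
    using sub k by (intro ext) (auto split: split_indicator)
  then show ?thesis unfolding II_def by simp
qed

lemma II_union: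
  assumes A: "A \<in> sets borel" and B: "B \<in> sets borel" and d: "A \<inter> B = {}"
  shows "II M (A \<union> B) k = II M A k + II M B k"
proof -
  have "(\<lambda>x. indicator (A \<union> B) x * max 0 (k - x)) = (\<lambda>x. indicator A x * max 0 (k - x) + indicator B x * max 0 (k - x))"
    using d by (intro ext) (auto split: split_indicator)
  then show ?thesis unfolding II_def using int_h[OF A] int_h[OF B] by (simp add: Bochner_Integration.integral_add)
qed

lemma II_single: "II M {a} k = measure M {a} * max 0 (k - a)"
proof -
  have "(\<lambda>x. indicator {a} x * max 0 (k - x)) = (\<lambda>x. indicator {a} x * max 0 (k - a))"
    by (intro ext) (auto split: split_indicator)
  then have "II M {a} k = (\<integral>x. indicator {a} x * max 0 (k - a) \<partial>M)" unfolding II_def by simp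
  also have "\<dots> = measure M {a} * max 0 (k - a)"
    by (simp add: AspaceM)
  finally show ?thesis .
qed

lemma II_lin:
  assumes A: "A \<in> sets borel" and le: "\<And>x. x \<in> A \<Longrightarrow> x \<le> k"
  shows "II M A k = measure M A * k - (\<integral>x. indicator A x * x \<partial>M)"
proof -
  have "(\<lambda>x. indicator A x * max 0 (k - x)) = (\<lambda>x. indicator A x * k - indicator A x * x)"
    using le by (intro ext) (auto split: split_indicator)
  then have "II M A k = (\<integral>x. indicator A x * k - indicator A x * x \<partial>M)" unfolding II_def by simp
  also have "\<dots> = (\<integral>x. indicator A x * k \<partial>M) - (\<integral>x. indicator A x * x \<partial>M)"
  proof (rule Bochner_Integration.integral_diff)
    show "integrable M (\<lambda>x. indicator A x * k)"
      by (rule int_ind_c[OF A])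
  qed (rule int_indx[OF A])
  also have "(\<integral>x. indicator A x * k \<partial>M) = measure M A * k"
    by (simp add: AspaceM)
  finally show ?thesis .
qed

lemma II_lip:
  assumes A: "A \<in> sets borel"
  shows "\<bar>II M A k - II M A k'\<bar> \<le> \<bar>k - k'\<bar>"
proof -
  have "\<bar>II M A k - II M A k'\<bar> = \<bar>\<integral>x. indicator A x * max 0 (k - x) - indicator A x * max 0 (k' - x) \<partial>M\<bar>"
    unfolding II_def using int_h[OF A] by simp
  also have "\<dots> \<le> (\<integral>x. \<bar>k - k'\<bar> \<partial>M)"
  proof (rule integral_abs_bound_integral)
    show "integrable M (\<lambda>x. indicator A x * max 0 (k - x) - indicator A x * max 0 (k' - x))"
      using int_h[OF A] by auto
    show "integrable M (\<lambda>x. \<bar>k - k'\<bar>)" by simp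
    fix x show "\<bar>indicator A x * max 0 (k - x) - indicator A x * max 0 (k' - x)\<bar> \<le> \<bar>k - k'\<bar>"
      by (auto split: split_indicator)
  qed
  also have "\<dots> = \<bar>k - k'\<bar>" by (simp add: prob_space)
  finally show ?thesis .
qed

lemma put_II: "put M k = II M UNIV k"
  unfolding put_def II_def by simp

lemma put_lower: "k - (\<integral>x. x \<partial>M) \<le> put M k"
proof -
  have "(\<integral>x. k - x \<partial>M) \<le> put M k"
    unfolding put_def
    by (rule Bochner_Integration.integral_mono) (use int_h[of UNIV k] iM in auto)
  moreover have "(\<integral>x. k - x \<partial>M) = k - (\<integral>x. x \<partial>M)"
    using iM by (simp add: prob_space)
  ultimately show ?thesis by simp
qed

lemma put_upper: "0 \<le> k \<Longrightarrow> put M k \<le> k + (\<integral>x. \<bar>x\<bar> \<partial>M)"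
proof -
  assume k: "0 \<le> k"
  have "put M k \<le> (\<integral>x. k + \<bar>x\<bar> \<partial>M)"
    unfolding put_def
    by (rule Bochner_Integration.integral_mono) (use int_h[of UNIV k] int_absx k in auto)
  moreover have "(\<integral>x. k + \<bar>x\<bar> \<partial>M) = k + (\<integral>x. \<bar>x\<bar> \<partial>M)"
    using int_absx by (simp add: prob_space)
  ultimately show ?thesis by simp
qed

lemma put_mono: "k \<le> k' \<Longrightarrow> put M k \<le> put M k'"
  unfolding put_def
  by (rule Bochner_Integration.integral_mono) (use int_h[of UNIV k] int_h[of UNIV k'] in auto)

lemma put_nonneg: "0 \<le> put M k"
  unfolding put_def by (rule Bochner_Integration.integral_nonneg) auto

lemma ext_integral_put: "ext_integral M (\<lambda>x. max 0 (k - x)) = ereal (put M k)"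
proof -
  have i: "integrable M (\<lambda>x. max 0 (k - x))" using int_h[of UNIV k] by simp
  have 1: "(\<integral>\<^sup>+ x. ennreal (max 0 (k - x)) \<partial>M) = ennreal (put M k)"
    unfolding put_def by (rule nn_integral_eq_integral[OF i]) auto
  have "\<And>x. ennreal (- max 0 (k - x)) = 0" by (simp add: ennreal_eq_0_iff)
  then have 2: "(\<integral>\<^sup>+ x. ennreal (- max 0 (k - x)) \<partial>M) = 0" by simp
  show ?thesis unfolding ext_integral_def 1 2 using put_nonneg[of k] by (simp add: zero_ennreal.rep_eq)
qed

end

lemma hconv: "convex_on UNIV (\<lambda>k::real. max 0 (k - a))"
proof (rule convex_onI)
  fix t x y :: real assume t: "0 < t" "t < 1"
  have e: "(1 - t) * x + t * y - a = (1 - t) * (x - a) + t * (y - a)" by (simp add: algebra_simps)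
  have "(1 - t) * (x - a) \<le> (1 - t) * max 0 (x - a)" using t by (intro mult_left_mono) auto
  moreover have "t * (y - a) \<le> t * max 0 (y - a)" using t by (intro mult_left_mono) auto
  moreover have "0 \<le> (1 - t) * max 0 (x - a)" "0 \<le> t * max 0 (y - a)" using t by auto
  ultimately show "max 0 ((1 - t) *\<^sub>R x + t *\<^sub>R y - a) \<le> (1 - t) * max 0 (x - a) + t * max 0 (y - a)"
    using e by simp
qed simp

lemma hconv': "convex_on UNIV (\<lambda>x::real. max 0 (k - x))"
proof (rule convex_onI)
  fix t x y :: real assume t: "0 < t" "t < 1"
  have e: "k - ((1 - t) * x + t * y) = (1 - t) * (k - x) + t * (k - y)" by (simp add: algebra_simps)
  have "(1 - t) * (k - x) \<le> (1 - t) * max 0 (k - x)" using t by (intro mult_left_mono) auto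
  moreover have "t * (k - y) \<le> t * max 0 (k - y)" using t by (intro mult_left_mono) auto
  moreover have "0 \<le> (1 - t) * max 0 (k - x)" "0 \<le> t * max 0 (k - y)" using t by auto
  ultimately show "max 0 (k - ((1 - t) *\<^sub>R x + t *\<^sub>R y)) \<le> (1 - t) * max 0 (k - x) + t * max 0 (k - y)"
    using e by simp
qed simp

lemma cmul_conv: "convex_on UNIV g \<Longrightarrow> 0 \<le> (c::real) \<Longrightarrow> convex_on UNIV (\<lambda>k. c * g k)"
  by (rule convex_on_cmul)

locale LM = mu: pmx \<mu> + nu: pmx \<nu> for \<mu> \<nu> :: "real measure" +
  fixes G :: "real \<Rightarrow> real"
  assumes cx: "cx_le \<mu> \<nu>" and qf: "quantile_fn \<mu> G"
begin

abbreviation "f w \<equiv> E_fn \<mu> \<nu> G w"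
abbreviation "pt w \<equiv> put_trunc \<mu> G w"
definition "cc w = w - measure \<mu> {..<G w}"

lemma Q1: "0 < w \<Longrightarrow> w < 1 \<Longrightarrow> measure \<mu> {..<G w} \<le> w \<and> w \<le> measure \<mu> {..G w}"
  using qf unfolding quantile_fn_def by auto

lemma mu_split: "measure \<mu> {..a} = measure \<mu> {..<a} + measure \<mu> {a}"
proof -
  have "{..a} = {..<a} \<union> {a}" by auto
  then show ?thesis using mu.finite_measure_Union[of "{..<a}" "{a}"] mu.sM by simp
qed

lemma mu_split2: "a < b \<Longrightarrow> measure \<mu> {..<b} = measure \<mu> {..a} + measure \<mu> {a<..<b}"
proof -
  assume ab: "a < b"
  have e: "{..<b} = {..a} \<union> {a<..<b}" using ab by auto
  have d: "{..a} \<inter> {a<..<b} = {}" by auto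
  show ?thesis unfolding e by (rule mu.finite_measure_Union[OF _ _ d]) (use mu.sM in auto)
qed

lemma G_mono: assumes "0 < w1" "w1 \<le> w2" "w2 < 1" shows "G w1 \<le> G w2"
proof (rule ccontr)
  assume "\<not> G w1 \<le> G w2"
  then have lt: "G w2 < G w1" by simp
  have "{..G w2} \<subseteq> {..<G w1}" using lt by auto
  then have "measure \<mu> {..G w2} \<le> measure \<mu> {..<G w1}"
    using mu.sM by (intro mu.finite_measure_mono) auto
  moreover have "w2 \<le> measure \<mu> {..G w2}" using Q1[of w2] assms by auto
  moreover have "measure \<mu> {..<G w1} \<le> w1" using Q1[of w1] assms by auto
  ultimately have "w1 = w2" using assms by simp
  then show False using lt by simp
qed

lemma cc_nonneg: "0 < w \<Longrightarrow> w < 1 \<Longrightarrow> 0 \<le> cc w"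
  using Q1[of w] unfolding cc_def by auto

lemma cc_le1: assumes "0 < w" "w < 1" shows "cc w \<le> 1"
proof -
  have "0 \<le> measure \<mu> {..<G w}" by (rule measure_nonneg)
  then show ?thesis unfolding cc_def using assms by linarith
qed

lemma cc_le_atom: "0 < w \<Longrightarrow> w < 1 \<Longrightarrow> cc w \<le> measure \<mu> {G w}"
  using Q1[of w] mu_split[of "G w"] unfolding cc_def by auto

lemma pt_eq: "pt w k = II \<mu> {..<G w} k + cc w * max 0 (k - G w)"
  unfolding put_trunc_def II_def cc_def by simp

lemma pt_nonneg: "0 < w \<Longrightarrow> w < 1 \<Longrightarrow> 0 \<le> pt w k"
  unfolding pt_eq using mu.II_nonneg cc_nonneg by auto

lemma put_le: "put \<mu> k \<le> put \<nu> k"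
proof -
  have "ext_integral \<mu> (\<lambda>x. max 0 (k - x)) \<le> ext_integral \<nu> (\<lambda>x. max 0 (k - x))"
    using cx hconv'[of k] unfolding cx_le_def by blast
  then show ?thesis unfolding mu.ext_integral_put nu.ext_integral_put by simp
qed

lemma put_mu_ge_pt: assumes "0 < w" "w < 1" shows "pt w k \<le> put \<mu> k"
proof -
  let ?a = "G w"
  have "put \<mu> k = II \<mu> ({..<?a} \<union> {?a}) k + II \<mu> {?a<..} k"
  proof -
    have "UNIV = ({..<?a} \<union> {?a}) \<union> {?a<..}" by auto
    then have "put \<mu> k = II \<mu> (({..<?a} \<union> {?a}) \<union> {?a<..}) k" by (simp add: mu.put_II)
    also have "\<dots> = II \<mu> ({..<?a} \<union> {?a}) k + II \<mu> {?a<..} k"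
      by (rule mu.II_union) auto
    finally show ?thesis .
  qed
  also have "II \<mu> ({..<?a} \<union> {?a}) k = II \<mu> {..<?a} k + II \<mu> {?a} k"
    by (rule mu.II_union) auto
  finally have e: "put \<mu> k = II \<mu> {..<?a} k + measure \<mu> {?a} * max 0 (k - ?a) + II \<mu> {?a<..} k"
    by (simp add: mu.II_single)
  have "cc w * max 0 (k - ?a) \<le> measure \<mu> {?a} * max 0 (k - ?a)"
    using cc_le_atom[OF assms] by (intro mult_right_mono) auto
  then show ?thesis unfolding pt_eq e using mu.II_nonneg[of "{?a<..}" k] by linarith
qed

lemma f_nonneg: "0 < w \<Longrightarrow> w < 1 \<Longrightarrow> 0 \<le> f w k"
  unfolding E_fn_def using put_le[of k] put_mu_ge_pt[of w k] by linarith

lemma f_le_put: "0 < w \<Longrightarrow> w < 1 \<Longrightarrow> f w k \<le> put \<nu> k"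
  unfolding E_fn_def using pt_nonneg[of w k] by linarith

lemma f_lip: assumes "0 < w" "w < 1" shows "\<bar>f w k - f w k'\<bar> \<le> 3 * \<bar>k - k'\<bar>"
proof -
  have 1: "\<bar>put \<nu> k - put \<nu> k'\<bar> \<le> \<bar>k - k'\<bar>" using nu.II_lip[of UNIV k k'] by (simp add: nu.put_II)
  have 2: "\<bar>II \<mu> {..<G w} k - II \<mu> {..<G w} k'\<bar> \<le> \<bar>k - k'\<bar>" by (rule mu.II_lip) simp
  have "\<bar>max 0 (k - G w) - max 0 (k' - G w)\<bar> \<le> \<bar>k - k'\<bar>" by (cases "k \<le> G w"; cases "k' \<le> G w") (simp_all add: max_def abs_if)
  then have 3: "\<bar>cc w * max 0 (k - G w) - cc w * max 0 (k' - G w)\<bar> \<le> \<bar>k - k'\<bar>"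
    using cc_nonneg[OF assms] cc_le1[OF assms]
    by (metis (no_types, opaque_lifting) abs_mult abs_of_nonneg mult_le_one right_diff_distrib
        mult_right_mono abs_ge_zero order_trans mult_1_left)
  show ?thesis unfolding E_fn_def pt_eq using 1 2 3 unfolding abs_le_iff by (elim conjE) (intro conjI; linarith)
qed

lemma f_cont: assumes "0 < w" "w < 1" shows "continuous_on UNIV (f w)"
proof (rule lipschitz_on_continuous_on)
  show "3-lipschitz_on UNIV (f w)"
    by (rule lipschitz_onI) (use f_lip[OF assms] in \<open>auto simp: dist_real_def\<close>)
qed

lemma f_isCont: "0 < w \<Longrightarrow> w < 1 \<Longrightarrow> isCont (f w) k"
  using f_cont continuous_on_eq_continuous_at[of UNIV] by blast

lemma pt_lin: assumes "0 < w" "w < 1" "G w \<le> k"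
  shows "pt w k = w * k - ((\<integral>x. indicator {..<G w} x * x \<partial>\<mu>) + cc w * G w)"
proof -
  have "II \<mu> {..<G w} k = measure \<mu> {..<G w} * k - (\<integral>x. indicator {..<G w} x * x \<partial>\<mu>)"
    by (rule mu.II_lin) (use assms in auto)
  then show ?thesis unfolding pt_eq using assms by (simp add: cc_def algebra_simps)
qed

lemma f_upper: assumes "0 < w" "w < 1"
  shows "\<exists>C. \<forall>k. max 0 (G w) \<le> k \<longrightarrow> f w k \<le> (1 - w) * k + C"
proof (intro exI allI impI)
  fix k assume k: "max 0 (G w) \<le> k"
  have "put \<nu> k \<le> k + (\<integral>x. \<bar>x\<bar> \<partial>\<nu>)" by (rule nu.put_upper) (use k in auto)
  then show "f w k \<le> (1 - w) * k + ((\<integral>x. \<bar>x\<bar> \<partial>\<nu>) + ((\<integral>x. indicator {..<G w} x * x \<partial>\<mu>) + cc w * G w))"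
    unfolding E_fn_def using pt_lin[OF assms, of k] k by (simp add: algebra_simps)
qed

lemma f_lower: assumes "0 < w" "w < 1"
  shows "\<exists>C. \<forall>k. G w \<le> k \<longrightarrow> (1 - w) * k - C \<le> f w k"
proof (intro exI allI impI)
  fix k assume k: "G w \<le> k"
  have "k - (\<integral>x. x \<partial>\<nu>) \<le> put \<nu> k" by (rule nu.put_lower)
  then show "(1 - w) * k - ((\<integral>x. x \<partial>\<nu>) - ((\<integral>x. indicator {..<G w} x * x \<partial>\<mu>) + cc w * G w)) \<le> f w k"
    unfolding E_fn_def using pt_lin[OF assms k] by (simp add: algebra_simps)
qed

end

context LM
begin

lemma p_rep:
  assumes w: "0 < w1" "w1 \<le> w2" "w2 < 1"
  shows "\<exists>A c1 c2 b. A \<in> sets borel \<and> A \<subseteq> {G w1..} \<and> 0 \<le> c1 \<and> 0 \<le> c2 \<and> G w1 \<le> b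
     \<and> measure \<mu> A + c1 + c2 = w2 - w1
     \<and> (\<forall>k. pt w2 k - pt w1 k = II \<mu> A k + c1 * max 0 (k - G w1) + c2 * max 0 (k - b))"
proof -
  let ?a = "G w1" and ?b = "G w2"
  have ab: "?a \<le> ?b" using G_mono[OF w] .
  show ?thesis
  proof (cases "?a = ?b")
    case True
    have "\<forall>k. pt w2 k - pt w1 k = II \<mu> {} k + (w2 - w1) * max 0 (k - G w1) + 0 * max 0 (k - ?a)"
      unfolding pt_eq II_def cc_def using True by (simp add: algebra_simps)
    then show ?thesis using w
      by (intro exI[of _ "{}"] exI[of _ "w2 - w1"] exI[of _ 0] exI[of _ ?a]) auto
  next
    case False
    then have lt: "?a < ?b" using ab by simp
    have u1: "II \<mu> {..<?b} k = II \<mu> {..<?a} k + measure \<mu> {?a} * max 0 (k - ?a) + II \<mu> {?a<..<?b} k" for k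
    proof -
      have "{..<?b} = ({..<?a} \<union> {?a}) \<union> {?a<..<?b}" using lt by auto
      then have "II \<mu> {..<?b} k = II \<mu> (({..<?a} \<union> {?a}) \<union> {?a<..<?b}) k" by simp
      also have "\<dots> = II \<mu> ({..<?a} \<union> {?a}) k + II \<mu> {?a<..<?b} k"
        by (rule mu.II_union) auto
      also have "II \<mu> ({..<?a} \<union> {?a}) k = II \<mu> {..<?a} k + II \<mu> {?a} k"
        by (rule mu.II_union) auto
      finally show ?thesis by (simp add: mu.II_single)
    qed
    have c1: "measure \<mu> {?a} - cc w1 = measure \<mu> {..?a} - w1"
      using mu_split[of ?a] unfolding cc_def by simp
    have rep: "\<forall>k. pt w2 k - pt w1 k = II \<mu> {?a<..<?b} k + (measure \<mu> {..?a} - w1) * max 0 (k - ?a) + cc w2 * max 0 (k - ?b)"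
    proof
      fix k
      have "pt w2 k - pt w1 k = II \<mu> {?a<..<?b} k + (measure \<mu> {?a} - cc w1) * max 0 (k - ?a) + cc w2 * max 0 (k - ?b)"
        unfolding pt_eq u1 by (simp add: algebra_simps)
      then show "pt w2 k - pt w1 k = II \<mu> {?a<..<?b} k + (measure \<mu> {..?a} - w1) * max 0 (k - ?a) + cc w2 * max 0 (k - ?b)"
        unfolding c1 .
    qed
    have m: "measure \<mu> {?a<..<?b} + (measure \<mu> {..?a} - w1) + cc w2 = w2 - w1"
      using mu_split2[OF lt] unfolding cc_def by simp
    have c1n: "0 \<le> measure \<mu> {..?a} - w1" using Q1[of w1] w by auto
    have c2n: "0 \<le> cc w2" using cc_nonneg[of w2] w by auto
    show ?thesis
      by (rule exI[of _ "{?a<..<?b}"], rule exI[of _ "measure \<mu> {..?a} - w1"], rule exI[of _ "cc w2"],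
          rule exI[of _ ?b]) (use rep m c1n c2n ab in auto)
  qed
qed

lemma p_props:
  assumes w: "0 < w1" "w1 \<le> w2" "w2 < 1"
  shows "convex_on UNIV (\<lambda>k. pt w2 k - pt w1 k)"
    and "0 \<le> pt w2 k - pt w1 k"
    and "k \<le> G w1 \<Longrightarrow> pt w2 k - pt w1 k = 0"
    and "G w1 \<le> k \<Longrightarrow> pt w2 k - pt w1 k \<le> (w2 - w1) * (k - G w1)"
proof -
  obtain A c1 c2 b where A: "A \<in> sets borel" "A \<subseteq> {G w1..}" and c: "0 \<le> c1" "0 \<le> c2"
    and b: "G w1 \<le> b" and m: "measure \<mu> A + c1 + c2 = w2 - w1"
    and rep: "\<And>k. pt w2 k - pt w1 k = II \<mu> A k + c1 * max 0 (k - G w1) + c2 * max 0 (k - b)"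
    using p_rep[OF w] by blast
  have "convex_on UNIV (\<lambda>k. II \<mu> A k + c1 * max 0 (k - G w1) + c2 * max 0 (k - b))"
    by (intro convex_on_add mu.II_convex[OF A(1)] convex_on_cmul hconv c)
  then show "convex_on UNIV (\<lambda>k. pt w2 k - pt w1 k)" unfolding rep .
  show "0 \<le> pt w2 k - pt w1 k" unfolding rep using mu.II_nonneg[of A k] c by simp
  show "k \<le> G w1 \<Longrightarrow> pt w2 k - pt w1 k = 0"
    unfolding rep using mu.II_zero[OF A(2)] b by simp
  show "G w1 \<le> k \<Longrightarrow> pt w2 k - pt w1 k \<le> (w2 - w1) * (k - G w1)"
  proof -
    assume k: "G w1 \<le> k"
    have mx: "max 0 (k - G w1) = k - G w1" using k by simp
    have 1: "II \<mu> A k \<le> measure \<mu> A * (k - G w1)" using mu.II_le[OF A, of k] unfolding mx .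
    have 2: "c2 * max 0 (k - b) \<le> c2 * (k - G w1)" using c b k by (intro mult_left_mono) auto
    have "pt w2 k - pt w1 k \<le> measure \<mu> A * (k - G w1) + c1 * (k - G w1) + c2 * (k - G w1)"
      unfolding rep using 1 2 k by simp
    also have "\<dots> = (measure \<mu> A + c1 + c2) * (k - G w1)" by (simp add: algebra_simps)
    also have "\<dots> = (w2 - w1) * (k - G w1)" using m by simp
    finally show ?thesis .
  qed
qed

end

lemma affine_conv: "convex_on UNIV (\<lambda>k::real. a + b * k)"
  by (rule convex_onI) (simp_all add: algebra_simps)

context LM
begin

abbreviation "psi w \<equiv> convex_minorant (f w)"

lemma psi_le: "0 < w \<Longrightarrow> w < 1 \<Longrightarrow> psi w k \<le> f w k"
  by (rule cm_le) (rule f_nonneg)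

lemma psi_ge: "0 < w \<Longrightarrow> w < 1 \<Longrightarrow> convex_on UNIV g \<Longrightarrow> (\<And>y. g y \<le> f w y) \<Longrightarrow> g k \<le> psi w k"
  by (rule cm_ge) (auto intro: f_nonneg)

lemma psi_conv: "0 < w \<Longrightarrow> w < 1 \<Longrightarrow> convex_on UNIV (psi w)"
  by (rule cm_convex) (rule f_nonneg)

lemma phi_eq: "phi_fn \<mu> \<nu> G w = Inf (subdiff (psi w) (G w))"
  by (simp add: phi_fn_def)

lemma phi_mem: "0 < w \<Longrightarrow> w < 1 \<Longrightarrow> phi_fn \<mu> \<nu> G w \<in> subdiff (psi w) (G w)"
  unfolding phi_eq by (rule subdiff_Inf_mem[OF psi_conv])

lemma sub_nonneg:
  assumes w: "0 < w" "w < 1" and s: "s \<in> subdiff (psi w) x"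
  shows "0 \<le> s"
proof (rule ccontr)
  assume "\<not> 0 \<le> s"
  then have s0: "s < 0" by simp
  define B where "B = put \<nu> x"
  have px: "psi w x \<le> B" using psi_le[OF w, of x] f_le_put[OF w, of x] unfolding B_def by linarith
  define d where "d = (B - psi w x + 1) / (- s)"
  have d0: "0 < d" unfolding d_def using px s0 by (intro divide_pos_pos) auto
  have "psi w x + s * ((x - d) - x) \<le> psi w (x - d)" by (rule subdiffD[OF s])
  moreover have "psi w x + s * ((x - d) - x) = B + 1"
    unfolding d_def using s0 by (simp add: field_simps)
  moreover have "psi w (x - d) \<le> B"
    using psi_le[OF w, of "x - d"] f_le_put[OF w, of "x - d"] nu.put_mono[of "x - d" x] d0
    unfolding B_def by linarith
  ultimately show False by linarith
qed

lemma sub_le: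
  assumes w: "0 < w" "w < 1" and s: "s \<in> subdiff (psi w) x"
  shows "s \<le> 1 - w"
proof (rule ccontr)
  assume "\<not> s \<le> 1 - w"
  then have D0: "0 < s - (1 - w)" by simp
  obtain C where C: "\<And>k. max 0 (G w) \<le> k \<Longrightarrow> f w k \<le> (1 - w) * k + C"
    using f_upper[OF w] by blast
  define z0 where "z0 = max (max 0 (G w)) x"
  define E where "E = C - psi w x + s * x"
  define z where "z = z0 + (\<bar>E\<bar> + 1) / (s - (1 - w))"
  have z0z: "z0 \<le> z" unfolding z_def using D0 by simp
  have "psi w x + s * (z - x) \<le> psi w z" by (rule subdiffD[OF s])
  also have "\<dots> \<le> f w z" by (rule psi_le[OF w])
  also have "\<dots> \<le> (1 - w) * z + C" by (rule C) (use z0z in \<open>auto simp: z0_def\<close>)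
  finally have 1: "(s - (1 - w)) * z \<le> E" unfolding E_def by (simp add: algebra_simps)
  have "(s - (1 - w)) * z = (s - (1 - w)) * z0 + (\<bar>E\<bar> + 1)"
    unfolding z_def using D0 by (simp add: field_simps)
  moreover have "0 \<le> (s - (1 - w)) * z0" using D0 unfolding z0_def by simp
  ultimately have "E < (s - (1 - w)) * z" by linarith
  with 1 show False by simp
qed

lemma phi_bounds: "0 < w \<Longrightarrow> w < 1 \<Longrightarrow> 0 \<le> phi_fn \<mu> \<nu> G w \<and> phi_fn \<mu> \<nu> G w \<le> 1 - w"
  using sub_nonneg phi_mem sub_le by blast

lemma part_i: "((phi_fn \<mu> \<nu> G) \<longlongrightarrow> 0) (at_left 1)"
proof (rule tendsto_sandwich[of "\<lambda>_. 0" _ _ "\<lambda>w. 1 - w"])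
  have ev: "eventually (\<lambda>w. w \<in> {0<..<1}) (at_left (1::real))"
    by (rule eventually_at_left_real) simp
  show "eventually (\<lambda>w. 0 \<le> phi_fn \<mu> \<nu> G w) (at_left 1)"
    using ev by eventually_elim (use phi_bounds in auto)
  show "eventually (\<lambda>w. phi_fn \<mu> \<nu> G w \<le> 1 - w) (at_left 1)"
    using ev by eventually_elim (use phi_bounds in auto)
  show "((\<lambda>_. 0) \<longlongrightarrow> (0::real)) (at_left 1)" by simp
  have "((\<lambda>w. 1 - w) \<longlongrightarrow> 1 - (1::real)) (at_left 1)"
    by (intro tendsto_intros)
  then show "((\<lambda>w. 1 - w) \<longlongrightarrow> (0::real)) (at_left 1)" by simp
qed

end

context LM
begin

lemma psi_cont_pt:
  assumes w: "0 < w" "w < 1"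
  shows "isCont (\<lambda>k. f w k - (c + s * (k - y))) k"
  by (intro continuous_intros f_isCont[OF w])

lemma cont_on_h:
  assumes w: "0 < w" "w < 1"
  shows "continuous_on S (\<lambda>k. f w k - (c + s * (k - y)))"
  by (intro continuous_at_imp_continuous_on ballI psi_cont_pt[OF w])

lemma claim_R:
  assumes v: "0 < v" "v < 1"
  defines "y \<equiv> G v" and "\<sigma> \<equiv> phi_fn \<mu> \<nu> G v"
  shows "1 - v \<le> \<sigma> \<or> (\<exists>b\<ge>y. f v b = psi v y + \<sigma> * (b - y))"
proof (rule ccontr)
  define l where "l k = psi v y + \<sigma> * (k - y)" for k
  assume "\<not> (1 - v \<le> \<sigma> \<or> (\<exists>b\<ge>y. f v b = psi v y + \<sigma> * (b - y)))"
  then have sg: "\<sigma> < 1 - v" and nb: "\<And>b. y \<le> b \<Longrightarrow> f v b \<noteq> l b" unfolding l_def by auto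
  have mem: "\<sigma> \<in> subdiff (psi v) y" unfolding \<sigma>_def y_def by (rule phi_mem[OF v])
  have lef: "l k \<le> f v k" for k
    using subdiffD[OF mem, of k] psi_le[OF v, of k] unfolding l_def by linarith
  define h where "h k = f v k - l k" for k
  have hpos: "y \<le> k \<Longrightarrow> 0 < h k" for k using lef[of k] nb[of k] unfolding h_def by fastforce
  have hnn: "0 \<le> h k" for k using lef[of k] unfolding h_def by simp
  have hcont: "isCont h k" for k unfolding h_def l_def by (rule psi_cont_pt[OF v])
  have hcon: "continuous_on S h" for S unfolding h_def l_def fun_eq_iff by (rule cont_on_h[OF v])
  have hy: "0 < h y" using hpos by simp
  obtain r where r: "0 < r" "\<And>k. \<bar>k - y\<bar> < r \<Longrightarrow> h y / 2 < h k"
  proof -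
    from hcont[of y, unfolded continuous_at_eps_delta] hy
    obtain d where d: "0 < d" "\<And>k. dist k y < d \<Longrightarrow> dist (h k) (h y) < h y / 2"
      by (metis half_gt_zero)
    show ?thesis
    proof (rule that[OF d(1)])
      fix k assume "\<bar>k - y\<bar> < d"
      then have "dist (h k) (h y) < h y / 2" using d(2) by (simp add: dist_real_def)
      then have "\<bar>h k - h y\<bar> < h y / 2" by (simp add: dist_real_def)
      then show "h y / 2 < h k" unfolding abs_less_iff by linarith
    qed
  qed
  obtain C where C: "\<And>k. y \<le> k \<Longrightarrow> (1 - v) * k - C \<le> f v k"
    using f_lower[OF v] unfolding y_def by blast
  define D where "D = 1 - v - \<sigma>"
  have D0: "0 < D" unfolding D_def using sg by simp
  define E0 where "E0 = (1 - v) * y - C - psi v y"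
  have far1: "y \<le> k \<Longrightarrow> D * (k - y) + E0 \<le> h k" for k
    using C[of k] unfolding h_def l_def D_def E0_def by (simp add: algebra_simps)
  define K where "K = y + 2 * (\<bar>E0\<bar> + 1) / D"
  have yK: "y < K" unfolding K_def using D0 by (simp add: field_simps)
  have far: "K \<le> k \<Longrightarrow> D / 2 * (k - y) + 1 \<le> h k" for k
  proof -
    assume k: "K \<le> k"
    have "2 * (\<bar>E0\<bar> + 1) / D \<le> k - y" using k unfolding K_def by simp
    then have "2 * (\<bar>E0\<bar> + 1) \<le> D * (k - y)" using D0 by (simp add: pos_divide_le_eq mult.commute)
    then have "\<bar>E0\<bar> + 1 \<le> D / 2 * (k - y)" by simp
    moreover have "D * (k - y) + E0 \<le> h k" using far1[of k] k yK by simp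
    moreover have "- \<bar>E0\<bar> \<le> E0" by simp
    moreover have "D * (k - y) = 2 * (D / 2 * (k - y))" by simp
    ultimately show ?thesis by linarith
  qed
  obtain m where m: "m \<in> {y..K}" "\<And>k. k \<in> {y..K} \<Longrightarrow> h m \<le> h k"
    using continuous_attains_inf[of "{y..K}" h] hcon yK by auto
  define c where "c = h m"
  have c0: "0 < c" unfolding c_def using hpos m(1) by simp
  define \<theta> where "\<theta> = min (D / 2) (c / (2 * (K - y)))"
  have th0: "0 < \<theta>" unfolding \<theta>_def using D0 c0 yK by simp
  define \<eta> where "\<eta> = min (min (h y / 2) (c / 2)) (min (\<theta> * r) 1)"
  have et0: "0 < \<eta>" unfolding \<eta>_def using hy c0 th0 r(1) by simp
  define g where "g k = l k + \<eta> + \<theta> * (k - y)" for k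
  have gle: "g k \<le> f v k" for k
  proof -
    consider "k \<le> y - r" | "y - r < k \<and> k < y" | "y \<le> k \<and> k \<le> K" | "K \<le> k" by linarith
    then show ?thesis
    proof cases
      case 1
      have "\<eta> \<le> \<theta> * r" unfolding \<eta>_def by simp
      moreover have "\<theta> * (k - y) \<le> \<theta> * (- r)" using 1 th0 by (intro mult_left_mono) auto
      ultimately show ?thesis unfolding g_def using lef[of k] by simp
    next
      case 2
      then have "\<bar>k - y\<bar> < r" by simp
      then have "h y / 2 < h k" by (rule r(2))
      moreover have "\<eta> \<le> h y / 2" unfolding \<eta>_def by simp
      moreover have "\<theta> * (k - y) \<le> 0" using 2 th0 by (simp add: mult_nonneg_nonpos)
      ultimately show ?thesis unfolding g_def h_def by simp
    next
      case 3
      have "c \<le> h k" unfolding c_def using m(2) 3 by simp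
      moreover have "\<eta> \<le> c / 2" unfolding \<eta>_def by simp
      moreover have "\<theta> * (k - y) \<le> c / 2"
      proof -
        have "\<theta> \<le> c / (2 * (K - y))" unfolding \<theta>_def by simp
        then have "\<theta> * (k - y) \<le> c / (2 * (K - y)) * (K - y)"
          using 3 th0 by (intro mult_mono) auto
        also have "\<dots> = c / 2" using yK by (simp add: field_simps)
        finally show ?thesis .
      qed
      ultimately show ?thesis unfolding g_def h_def by simp
    next
      case 4
      have "\<eta> \<le> 1" unfolding \<eta>_def by simp
      moreover have "\<theta> * (k - y) \<le> D / 2 * (k - y)"
      proof (rule mult_right_mono)
        show "\<theta> \<le> D / 2" unfolding \<theta>_def by (rule min.cobounded1)
      qed (use 4 yK in auto)
      moreover have "D / 2 * (k - y) + 1 \<le> h k" by (rule far[OF 4])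
      ultimately show ?thesis unfolding g_def h_def by simp
    qed
  qed
  have gconv: "convex_on UNIV g"
  proof -
    have "g = (\<lambda>k. (psi v y - \<sigma> * y + \<eta> - \<theta> * y) + (\<sigma> + \<theta>) * k)"
      unfolding g_def l_def by (simp add: fun_eq_iff algebra_simps)
    then show ?thesis using affine_conv by simp
  qed
  have "g y \<le> psi v y" by (rule psi_ge[OF v gconv gle])
  then show False unfolding g_def l_def using et0 by simp
qed

lemma f_diff: "f u k = f v k + (pt v k - pt u k)"
  unfolding E_fn_def by simp

lemma part_ii:
  assumes uv: "0 < u" "u < v" "v < 1"
  shows "phi_fn \<mu> \<nu> G u - (v - u) \<le> phi_fn \<mu> \<nu> G v"
proof -
  have u: "0 < u" "u < 1" and v: "0 < v" "v < 1" using uv by auto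
  define x where "x = G u"
  define y where "y = G v"
  define \<sigma> where "\<sigma> = phi_fn \<mu> \<nu> G v"
  define l where "l k = psi v y + \<sigma> * (k - y)" for k
  define p where "p k = pt v k - pt u k" for k
  have xy: "x \<le> y" unfolding x_def y_def by (rule G_mono) (use uv in auto)
  have memv: "\<sigma> \<in> subdiff (psi v) y" unfolding \<sigma>_def y_def by (rule phi_mem[OF v])
  have lef: "l k \<le> f v k" for k
    using subdiffD[OF memv, of k] psi_le[OF v, of k] unfolding l_def by linarith
  have pconv: "convex_on UNIV p" unfolding p_def by (rule p_props(1)) (use uv in auto)
  have pnn: "0 \<le> p k" for k unfolding p_def by (rule p_props(2)) (use uv in auto)
  have px: "p x = 0" unfolding p_def x_def by (rule p_props(3)) (use uv in auto)
  have pb: "x \<le> k \<Longrightarrow> p k \<le> (v - u) * (k - x)" for k unfolding p_def x_def by (rule p_props(4)) (use uv in auto)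
  have fu: "f u k = f v k + p k" for k unfolding p_def by (rule f_diff)
  have lpconv: "convex_on UNIV (\<lambda>k. l k + p k)"
  proof -
    have "l = (\<lambda>k. (psi v y - \<sigma> * y) + \<sigma> * k)" unfolding l_def by (simp add: fun_eq_iff algebra_simps)
    then have "convex_on UNIV l" using affine_conv by simp
    then show ?thesis using pconv by (rule convex_on_add)
  qed
  have lp: "l k + p k \<le> psi u k" for k
    by (rule psi_ge[OF u lpconv]) (use lef fu in auto)
  have "phi_fn \<mu> \<nu> G u \<le> \<sigma> + (v - u)"
  proof (cases "1 - v \<le> \<sigma>")
    case True
    then show ?thesis using phi_bounds[OF u] by simp
  next
    case False
    then obtain b where b: "y \<le> b" "f v b = l b"
      using claim_R[OF v] unfolding l_def y_def \<sigma>_def by auto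
    show ?thesis
    proof (cases "x < b")
      case True
      have memu: "phi_fn \<mu> \<nu> G u \<in> subdiff (psi u) x" unfolding x_def by (rule phi_mem[OF u])
      have "psi u x + phi_fn \<mu> \<nu> G u * (b - x) \<le> psi u b" by (rule subdiffD[OF memu])
      also have "\<dots> \<le> f u b" by (rule psi_le[OF u])
      also have "\<dots> \<le> l b + (v - u) * (b - x)" using fu[of b] b(2) pb[of b] True by simp
      finally have 1: "psi u x + phi_fn \<mu> \<nu> G u * (b - x) \<le> l b + (v - u) * (b - x)" .
      have 2: "l x \<le> psi u x" using lp[of x] px by simp
      have "phi_fn \<mu> \<nu> G u * (b - x) \<le> (\<sigma> + (v - u)) * (b - x)"
        using 1 2 unfolding l_def by (simp add: algebra_simps)
      then show ?thesis using True by (simp add: mult_le_cancel_right)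
    next
      case False
      then have bx: "b = x" "y = x" using b(1) xy by auto
      have "\<sigma> \<in> subdiff (psi u) x"
      proof (rule subdiffI)
        fix z
        have "psi u x \<le> f u x" by (rule psi_le[OF u])
        also have "\<dots> = l x" using fu[of x] px b(2) bx by simp
        finally have "psi u x + \<sigma> * (z - x) \<le> l z" unfolding l_def using bx by (simp add: algebra_simps)
        also have "\<dots> \<le> psi u z" using lp[of z] pnn[of z] by simp
        finally show "psi u x + \<sigma> * (z - x) \<le> psi u z" .
      qed
      then have "phi_fn \<mu> \<nu> G u \<le> \<sigma>" unfolding phi_eq x_def by (rule subdiff_Inf_le)
      then show ?thesis using uv by simp
    qed
  qed
  then show ?thesis unfolding \<sigma>_def by simp
qed

end

context LM
begin

lemma claim_L:
  assumes v: "0 < v" "v < 1"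
  defines "y \<equiv> G v" and "\<sigma> \<equiv> phi_fn \<mu> \<nu> G v"
  assumes sp: "0 < \<sigma>"
  shows "\<exists>a\<le>y. f v a = psi v y + \<sigma> * (a - y)"
proof (rule ccontr)
  define l where "l k = psi v y + \<sigma> * (k - y)" for k
  assume "\<not> (\<exists>a\<le>y. f v a = psi v y + \<sigma> * (a - y))"
  then have na: "\<And>a. a \<le> y \<Longrightarrow> f v a \<noteq> l a" unfolding l_def by auto
  have mem: "\<sigma> \<in> subdiff (psi v) y" unfolding \<sigma>_def y_def by (rule phi_mem[OF v])
  have lef: "l k \<le> f v k" for k
    using subdiffD[OF mem, of k] psi_le[OF v, of k] unfolding l_def by linarith
  define h where "h k = f v k - l k" for k
  have hpos: "k \<le> y \<Longrightarrow> 0 < h k" for k using lef[of k] na[of k] unfolding h_def by fastforce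
  have hcon: "continuous_on S h" for S unfolding h_def l_def fun_eq_iff by (rule cont_on_h[OF v])
  have psy: "0 \<le> psi v y" by (rule cm_nonneg) (rule f_nonneg[OF v])
  define K where "K = max 1 (2 * psi v y / \<sigma>)"
  have K1: "1 \<le> K" unfolding K_def by simp
  obtain m where m: "m \<in> {y - K..y}" "\<And>k. k \<in> {y - K..y} \<Longrightarrow> h m \<le> h k"
    using continuous_attains_inf[of "{y - K..y}" h] hcon K1 by auto
  define c where "c = h m"
  have c0: "0 < c" unfolding c_def using hpos m(1) by simp
  define \<theta> where "\<theta> = min (\<sigma> / 2) (c / K)"
  have th0: "0 < \<theta>" unfolding \<theta>_def using sp c0 K1 by simp
  define g where "g k = psi v y + (\<sigma> - \<theta>) * (k - y)" for k
  have gle: "g k \<le> f v k" for k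
  proof -
    consider "y \<le> k" | "y - K \<le> k \<and> k \<le> y" | "k \<le> y - K" by linarith
    then show ?thesis
    proof cases
      case 1
      have "\<theta> * (k - y) \<ge> 0" using 1 th0 by simp
      then have "g k \<le> l k" unfolding g_def l_def by (simp add: algebra_simps)
      then show ?thesis using lef[of k] by simp
    next
      case 2
      have "c \<le> h k" unfolding c_def using m(2) 2 by simp
      moreover have "\<theta> * (y - k) \<le> c"
      proof -
        have "\<theta> \<le> c / K" unfolding \<theta>_def by (rule min.cobounded2)
        then have "\<theta> * (y - k) \<le> c / K * K" using 2 th0 by (intro mult_mono) auto
        also have "\<dots> = c" using K1 by simp
        finally show ?thesis .
      qed
      moreover have "g k = l k + \<theta> * (y - k)" unfolding g_def l_def by (simp add: algebra_simps)
      ultimately show ?thesis unfolding h_def by simp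
    next
      case 3
      have "\<theta> * (y - k) \<le> \<sigma> / 2 * (y - k)"
      proof (rule mult_right_mono)
        show "\<theta> \<le> \<sigma> / 2" unfolding \<theta>_def by (rule min.cobounded1)
      qed (use 3 K1 in auto)
      moreover have "psi v y \<le> \<sigma> / 2 * (y - k)"
      proof -
        have "2 * psi v y / \<sigma> \<le> y - k" using 3 unfolding K_def by simp
        then have "2 * psi v y \<le> (y - k) * \<sigma>" using sp by (simp add: pos_divide_le_eq)
        then show ?thesis by (simp add: algebra_simps)
      qed
      moreover have "0 \<le> f v k" by (rule f_nonneg[OF v])
      moreover have "g k = l k + \<theta> * (y - k)" unfolding g_def l_def by (simp add: algebra_simps)
      moreover have "l k = psi v y - \<sigma> * (y - k)" unfolding l_def by (simp add: algebra_simps)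
      moreover have "\<sigma> * (y - k) = 2 * (\<sigma> / 2 * (y - k))" by simp
      ultimately show ?thesis by linarith
    qed
  qed
  have gconv: "convex_on UNIV g"
  proof -
    have "g = (\<lambda>k. (psi v y - (\<sigma> - \<theta>) * y) + (\<sigma> - \<theta>) * k)"
      unfolding g_def by (simp add: fun_eq_iff algebra_simps)
    then show ?thesis using affine_conv by simp
  qed
  have "\<sigma> - \<theta> \<in> subdiff (psi v) y"
  proof (rule subdiffI)
    fix z
    have "g z \<le> psi v z" by (rule psi_ge[OF v gconv gle])
    then show "psi v y + (\<sigma> - \<theta>) * (z - y) \<le> psi v z" unfolding g_def .
  qed
  then have "\<sigma> \<le> \<sigma> - \<theta>" unfolding \<sigma>_def y_def phi_eq by (rule subdiff_Inf_le)
  then show False using th0 by simp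
qed

lemma touch_transfer:
  assumes w: "0 < w1" "w1 \<le> w2" "w2 < 1" and t: "psi w2 z = f w2 z"
  shows "psi w1 z = f w1 z"
proof -
  have w1: "0 < w1" "w1 < 1" and w2: "0 < w2" "w2 < 1" using w by auto
  define p where "p k = pt w2 k - pt w1 k" for k
  have pconv: "convex_on UNIV p" unfolding p_def by (rule p_props(1)[OF w])
  have fu: "f w1 k = f w2 k + p k" for k unfolding p_def by (rule f_diff)
  have c: "convex_on UNIV (\<lambda>k. psi w2 k + p k)"
    by (rule convex_on_add[OF psi_conv[OF w2] pconv])
  have "psi w2 z + p z \<le> psi w1 z"
    by (rule psi_ge[OF w1 c]) (use psi_le[OF w2] fu in auto)
  moreover have "psi w1 z \<le> f w1 z" by (rule psi_le[OF w1])
  ultimately show ?thesis using fu[of z] t by simp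
qed

lemma S_eq: "S_fn \<mu> \<nu> G w = Inf {z. G w \<le> z \<and> psi w z = f w z}"
  unfolding S_fn_def Zf_def by simp

lemma no_touch:
  assumes uv: "u < v" and T: "connected T" "T \<subseteq> A_lt \<mu> \<nu> G" "u \<in> T" "v \<in> T"
    and a: "G u \<le> a" "a \<le> G v" and ta: "psi v a = f v a"
  shows False
proof -
  have A01: "A_lt \<mu> \<nu> G \<subseteq> {0<..<1}" unfolding A_lt_def by auto
  have u: "0 < u" "u < 1" and v: "0 < v" "v < 1" using T A01 by auto
  define W where "W = {w. 0 < w \<and> w \<le> v \<and> G w \<le> a}"
  have uW: "u \<in> W" unfolding W_def using u uv a by auto
  have Wne: "W \<noteq> {}" using uW by auto
  have Wbdd: "bdd_above W" unfolding W_def by (rule bdd_aboveI[of _ v]) auto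
  define w0 where "w0 = Sup W"
  have uw0: "u \<le> w0" unfolding w0_def by (rule cSup_upper[OF uW Wbdd])
  have w0v: "w0 \<le> v" unfolding w0_def by (rule cSup_least[OF Wne]) (auto simp: W_def)
  have w0pos: "0 < w0" using uw0 u by simp
  have w0T: "w0 \<in> T"
  proof -
    have "is_interval T" using T(1) by (simp add: is_interval_connected_1)
    then show ?thesis unfolding is_interval_1 using T(3,4) uw0 w0v by blast
  qed
  then have w0A: "w0 \<in> A_lt \<mu> \<nu> G" using T(2) by auto
  then have lims: "Lim (at_right w0) G < Lim (at_left w0) (S_fn \<mu> \<nu> G)" unfolding A_lt_def by simp
  \<comment> \<open>below w0, a is a touching point\<close>
  have Gle: "G w \<le> a" if "0 < w" "w < w0" for w
  proof -
    have "w < Sup W" using that(2) unfolding w0_def .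
    then obtain w' where "w' \<in> W" "w < w'" using less_cSup_iff[OF Wne Wbdd, of w] by auto
    then have "G w \<le> G w'" "G w' \<le> a" unfolding W_def using that v by (auto intro!: G_mono)
    then show ?thesis by simp
  qed
  have touch: "psi w a = f w a" if "0 < w" "w \<le> v" for w
    by (rule touch_transfer[OF that(1) that(2) v(2) ta])
  define Z where "Z w = {z. G w \<le> z \<and> psi w z = f w z}" for w
  have aZ: "a \<in> Z w" if "0 < w" "w < w0" for w
    unfolding Z_def using Gle[OF that] touch[of w] that w0v by auto
  have Zbdd: "bdd_below (Z w)" for w unfolding Z_def by (rule bdd_belowI[of _ "G w"]) auto
  have S_le: "S_fn \<mu> \<nu> G w \<le> a" if "0 < w" "w < w0" for w
    unfolding S_eq Z_def[symmetric] by (rule cInf_lower[OF aZ[OF that] Zbdd])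
  have S_mono: "S_fn \<mu> \<nu> G w1 \<le> S_fn \<mu> \<nu> G w2" if "0 < w1" "w1 \<le> w2" "w2 < w0" for w1 w2
  proof -
    have "Z w2 \<subseteq> Z w1"
    proof
      fix z assume "z \<in> Z w2"
      then have z: "G w2 \<le> z" "psi w2 z = f w2 z" unfolding Z_def by auto
      have "G w1 \<le> G w2" by (rule G_mono) (use that w0v v in auto)
      moreover have "psi w1 z = f w1 z"
        by (rule touch_transfer[OF that(1) that(2) _ z(2)]) (use that w0v v in auto)
      ultimately show "z \<in> Z w1" using z unfolding Z_def by auto
    qed
    moreover have "Z w2 \<noteq> {}" using aZ[of w2] that by auto
    ultimately show ?thesis unfolding S_eq Z_def[symmetric] by (intro cInf_superset_mono Zbdd)
  qed
  define LS where "LS = Sup (S_fn \<mu> \<nu> G ` ({..<w0} \<inter> {0<..}))"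
  have tS: "(S_fn \<mu> \<nu> G \<longlongrightarrow> LS) (at w0 within ({..<w0} \<inter> {0<..}))"
    unfolding LS_def by (rule Lim_left_bound[where K=a]) (auto intro: S_mono S_le)
  have "at w0 within ({..<w0} \<inter> {0<..}) = at_left w0"
    by (rule at_within_nhd[where S="{0<..}"]) (use w0pos in auto)
  then have tS': "(S_fn \<mu> \<nu> G \<longlongrightarrow> LS) (at_left w0)" using tS by simp
  have LS_le: "LS \<le> a"
    unfolding LS_def
  proof (rule cSup_least)
    have "w0 / 2 \<in> {..<w0} \<inter> {0<..}" using w0pos by auto
    then show "S_fn \<mu> \<nu> G ` ({..<w0} \<inter> {0<..}) \<noteq> {}" by blast
  qed (auto intro: S_le)
  have LimS: "Lim (at_left w0) (S_fn \<mu> \<nu> G) = LS" by (rule tendsto_Lim[OF _ tS']) simp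
  have w01: "w0 < 1" using w0v v by simp
  define LG where "LG = Inf (G ` ({w0<..} \<inter> {..<1}))"
  have tG: "(G \<longlongrightarrow> LG) (at w0 within ({w0<..} \<inter> {..<1}))"
    unfolding LG_def
  proof (rule Lim_right_bound[where K="G w0"])
    fix a' b' :: real assume "a' \<in> {..<1}" "b' \<in> {..<1}" "w0 < a'" "a' \<le> b'"
    then show "G a' \<le> G b'" using w0pos by (intro G_mono) auto
  next
    fix a' :: real assume "a' \<in> {..<1}" "w0 < a'"
    then show "G w0 \<le> G a'" using w0pos by (intro G_mono) auto
  qed
  have "at w0 within ({w0<..} \<inter> {..<1}) = at_right w0"
    by (rule at_within_nhd[where S="{..<1}"]) (use w01 in auto)
  then have tG': "(G \<longlongrightarrow> LG) (at_right w0)" using tG by simp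
  have LimG: "Lim (at_right w0) G = LG" by (rule tendsto_Lim[OF _ tG']) simp
  have "LG < a" using lims LS_le unfolding LimS LimG by simp
  moreover have "(w0 + 1) / 2 \<in> {w0<..} \<inter> {..<1}" using w01 by auto
  ultimately obtain w where w: "w \<in> {w0<..} \<inter> {..<1}" "G w < a"
    using cInf_lessD[of "G ` ({w0<..} \<inter> {..<1})" a] unfolding LG_def by blast
  show False
  proof (cases "w0 < v")
    case True
    define w' where "w' = min w v"
    have "G w' \<le> G w" unfolding w'_def by (rule G_mono) (use w w0pos v in auto)
    then have "w' \<in> W" unfolding W_def w'_def using w w0pos True by auto
    then have "w' \<le> w0" unfolding w0_def by (rule cSup_upper[OF _ Wbdd])
    then show False using w True unfolding w'_def by auto
  next
    case False
    then have "w0 = v" using w0v by simp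
    then have "G v \<le> G w" using w v by (intro G_mono) auto
    then show False using w a by simp
  qed
qed

lemma part_iii:
  assumes uv: "u < v" and cc: "connected_component (A_lt \<mu> \<nu> G) u v"
  shows "phi_fn \<mu> \<nu> G v \<le> phi_fn \<mu> \<nu> G u"
proof -
  obtain T where T: "connected T" "T \<subseteq> A_lt \<mu> \<nu> G" "u \<in> T" "v \<in> T"
    using cc unfolding connected_component_def by blast
  have A01: "A_lt \<mu> \<nu> G \<subseteq> {0<..<1}" unfolding A_lt_def by auto
  have u: "0 < u" "u < 1" and v: "0 < v" "v < 1" using T A01 by auto
  define x where "x = G u"
  define y where "y = G v"
  define \<sigma> where "\<sigma> = phi_fn \<mu> \<nu> G v"
  define l where "l k = psi v y + \<sigma> * (k - y)" for k
  define p where "p k = pt v k - pt u k" for k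
  have xy: "x \<le> y" unfolding x_def y_def by (rule G_mono) (use u v uv in auto)
  show ?thesis
  proof (cases "\<sigma> \<le> 0")
    case True
    then show ?thesis using phi_bounds[OF u] unfolding \<sigma>_def by simp
  next
    case False
    then have sp: "0 < \<sigma>" by simp
    obtain a where a: "a \<le> y" "f v a = l a"
      using claim_L[OF v sp[unfolded \<sigma>_def]] unfolding l_def y_def \<sigma>_def by auto
    have memv: "\<sigma> \<in> subdiff (psi v) y" unfolding \<sigma>_def y_def by (rule phi_mem[OF v])
    have lef: "l k \<le> psi v k" for k
      using subdiffD[OF memv, of k] unfolding l_def by linarith
    show ?thesis
    proof (cases "a < x")
      case True
      have pconv: "convex_on UNIV p" unfolding p_def by (rule p_props(1)) (use u v uv in auto)
      have pnn: "0 \<le> p k" for k unfolding p_def by (rule p_props(2)) (use u v uv in auto)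
      have pa: "p a = 0" unfolding p_def by (rule p_props(3)) (use u v uv True x_def in auto)
      have fu: "f u k = f v k + p k" for k unfolding p_def by (rule f_diff)
      have lpconv: "convex_on UNIV (\<lambda>k. l k + p k)"
      proof -
        have "l = (\<lambda>k. (psi v y - \<sigma> * y) + \<sigma> * k)" unfolding l_def by (simp add: fun_eq_iff algebra_simps)
        then have "convex_on UNIV l" using affine_conv by simp
        then show ?thesis using pconv by (rule convex_on_add)
      qed
      have lp: "l k + p k \<le> psi u k" for k
        by (rule psi_ge[OF u lpconv]) (use lef psi_le[OF v] fu in \<open>auto intro: order_trans\<close>)
      have "\<sigma> \<le> phi_fn \<mu> \<nu> G u"
        unfolding phi_eq
      proof (rule subdiff_Inf_ge[OF psi_conv[OF u]])
        fix s assume s: "s \<in> subdiff (psi u) (G u)"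
        have "psi u x + s * (a - x) \<le> psi u a" using subdiffD[OF s] unfolding x_def .
        also have "\<dots> \<le> f u a" by (rule psi_le[OF u])
        also have "\<dots> = l a" using fu[of a] pa a(2) by simp
        finally have 1: "psi u x + s * (a - x) \<le> l a" .
        have 2: "l x \<le> psi u x" using lp[of x] pnn[of x] by simp
        have "s * (a - x) \<le> \<sigma> * (a - x)" using 1 2 unfolding l_def by (simp add: algebra_simps)
        then show "\<sigma> \<le> s" using True by (simp add: mult_le_cancel_right)
      qed
      then show ?thesis unfolding \<sigma>_def .
    next
      case False
      have ta: "psi v a = f v a" using lef[of a] psi_le[OF v, of a] a(2) by simp
      have False
        by (rule no_touch[OF uv T _ _ ta]) (use False a(1) x_def y_def in auto)
      then show ?thesis ..
    qed
  qed
qed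

end

theorem lemma5p2:
  fixes \<mu> \<nu> :: "real measure" and G :: "real \<Rightarrow> real"
  assumes "prob_space \<mu>" and "sets \<mu> = sets borel"
    and "prob_space \<nu>" and "sets \<nu> = sets borel"
    and "integrable \<mu> (\<lambda>x. x)" and "integrable \<nu> (\<lambda>x. x)"
    and "cx_le \<mu> \<nu>"
    and "is_interval {k. put \<nu> k - put \<mu> k > 0}"
    and "quantile_fn \<mu> G"
  shows "((phi_fn \<mu> \<nu> G) \<longlongrightarrow> 0) (at_left 1)
    \<and> (\<forall>u v. 0 < u \<and> u < v \<and> v < 1 \<longrightarrow> phi_fn \<mu> \<nu> G v \<ge> phi_fn \<mu> \<nu> G u - (v - u))
    \<and> (\<forall>u v. u < v \<and> connected_component (A_lt \<mu> \<nu> G) u v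
           \<longrightarrow> phi_fn \<mu> \<nu> G v \<le> phi_fn \<mu> \<nu> G u)"
proof -
  have p1: "pmx \<mu>" by (intro pmx.intro pmx_axioms.intro) (use assms in auto)
  have p2: "pmx \<nu>" by (intro pmx.intro pmx_axioms.intro) (use assms in auto)
  interpret L: LM \<mu> \<nu> G by (intro LM.intro LM_axioms.intro p1 p2) (use assms in auto)
  show ?thesis using L.part_i L.part_ii L.part_iii by auto
qed

end
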